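(* Let $m\ge 2$, let $n_1,\dots,n_m\ge 5$ be odd, and let $\mathcal{C}=\mathcal{C}(C_{n_1},\dots,C_{n_m})$ be the odd chain cycle. Then the vertex cover number of its strong resolving graph is $$\alpha(\mathcal{C}_{SR})=m-1+\left\lfloor\frac{n_1}{2}\right\rfloor+\left\lfloor\frac{n_m}{2}\right\rfloor+\sum_{i=2}^{m-1}\left\lfloor\frac{n_i-2}{2}\right\rfloor.$$
   Context: Let $C_{n_1},\dots,C_{n_m}$ be pairwise disjoint cycles, $V(C_{n_i})=\{v^i_1,\dots,v^i_{n_i}\}$ with $v^i_j$ adjacent to $v^i_{j+1}$ (indices mod $n_i$). The odd chain cycle (all $n_i$ odd) is obtained by identifying $v^i_{(n_i+1)/2+1}$ with $v^{i+1}_1$ for $i=1,\dots,m-1$. A vertex $u$ is maximally distant from $v$ if every neighbor $w$ of $u$ satisfies $d(v,w)\le d(u,v)$; $u,v$ are mutually maximally distant if each is maximally distant from the other. The strong resolving graph $G_{SR}$ of a connected graph $G$ has vertex set $V(G)$, with $u,v$ adjacent iff they are mutually maximally distant in $G$. $\alpha(H)$ denotes the minimum size of a vertex cover of $H$. *)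

theory Defs
  imports Main
begin

definition gdist :: "('a \<Rightarrow> 'a \<Rightarrow> bool) \<Rightarrow> 'a \<Rightarrow> 'a \<Rightarrow> nat" where
  "gdist adj u v = (LEAST k. (adj ^^ k) u v)"

definition max_distant :: "('a \<Rightarrow> 'a \<Rightarrow> bool) \<Rightarrow> 'a \<Rightarrow> 'a \<Rightarrow> bool" where
  "max_distant adj u v \<longleftrightarrow> (\<forall>w. adj u w \<longrightarrow> gdist adj v w \<le> gdist adj u v)"

definition mutually_max_distant :: "('a \<Rightarrow> 'a \<Rightarrow> bool) \<Rightarrow> 'a \<Rightarrow> 'a \<Rightarrow> bool" where
  "mutually_max_distant adj u v \<longleftrightarrow> max_distant adj u v \<and> max_distant adj v u"

definition strong_resolving_adj :: "'a set \<Rightarrow> ('a \<Rightarrow> 'a \<Rightarrow> bool) \<Rightarrow> 'a \<Rightarrow> 'a \<Rightarrow> bool" where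
  "strong_resolving_adj V adj u v \<longleftrightarrow> u \<in> V \<and> v \<in> V \<and> mutually_max_distant adj u v"

definition is_vertex_cover :: "'a set \<Rightarrow> ('a \<Rightarrow> 'a \<Rightarrow> bool) \<Rightarrow> 'a set \<Rightarrow> bool" where
  "is_vertex_cover V adj C \<longleftrightarrow> C \<subseteq> V \<and> (\<forall>u\<in>V. \<forall>v\<in>V. adj u v \<longrightarrow> u \<in> C \<or> v \<in> C)"

definition vertex_cover_number :: "'a set \<Rightarrow> ('a \<Rightarrow> 'a \<Rightarrow> bool) \<Rightarrow> nat" where
  "vertex_cover_number V adj = (LEAST k. \<exists>C. is_vertex_cover V adj C \<and> finite C \<and> card C = k)"

text \<open>Vertex v^i_j of cycle C_{n_i} is the pair (i,j), 1 \<le> i \<le> m, 1 \<le> j \<le> n i.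
  The identification of v^i_{(n_i+1)/2+1} with v^{i+1}_1 is realised by the canonical
  representative map: v^{i+1}_1 is represented by (i, (n i + 1) div 2 + 1).\<close>

definition occ_canon :: "(nat \<Rightarrow> nat) \<Rightarrow> nat \<times> nat \<Rightarrow> nat \<times> nat" where
  "occ_canon n p = (if fst p \<ge> 2 \<and> snd p = 1 then (fst p - 1, (n (fst p - 1) + 1) div 2 + 1) else p)"

definition occ_verts :: "nat \<Rightarrow> (nat \<Rightarrow> nat) \<Rightarrow> (nat \<times> nat) set" where
  "occ_verts m n = occ_canon n ` {(i, j). 1 \<le> i \<and> i \<le> m \<and> 1 \<le> j \<and> j \<le> n i}"

definition cyc_next :: "(nat \<Rightarrow> nat) \<Rightarrow> nat \<Rightarrow> nat \<Rightarrow> nat" where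
  "cyc_next n i j = (if j = n i then 1 else j + 1)"

definition occ_adj :: "nat \<Rightarrow> (nat \<Rightarrow> nat) \<Rightarrow> nat \<times> nat \<Rightarrow> nat \<times> nat \<Rightarrow> bool" where
  "occ_adj m n x y \<longleftrightarrow> (\<exists>i j. 1 \<le> i \<and> i \<le> m \<and> 1 \<le> j \<and> j \<le> n i \<and>
      ((x = occ_canon n (i, j) \<and> y = occ_canon n (i, cyc_next n i j)) \<or>
       (y = occ_canon n (i, j) \<and> x = occ_canon n (i, cyc_next n i j))))"

end

theory Submission imports Defs begin

definition cd :: "nat \<Rightarrow> nat \<Rightarrow> nat \<Rightarrow> nat" where
  "cd N a b = (if a \<le> b then min (b - a) (N - (b - a)) else min (a - b) (N - (a - b)))"
definition nxt :: "nat \<Rightarrow> nat \<Rightarrow> nat" where "nxt N j = (if j = N then 1 else j + 1)"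
definition prv :: "nat \<Rightarrow> nat \<Rightarrow> nat" where "prv N j = (if j = 1 then N else j - 1)"

lemma cd_sym: "cd N a b = cd N b a" unfolding cd_def by auto
lemma cd_self[simp]: "cd N a a = 0" unfolding cd_def by simp
lemma cd_le: "1 \<le> a \<Longrightarrow> a \<le> N \<Longrightarrow> 1 \<le> b \<Longrightarrow> b \<le> N \<Longrightarrow> cd N a b \<le> N div 2"
  unfolding cd_def min_def by (auto split: if_splits)
lemma cd_zero: "cd N a b = 0 \<Longrightarrow> 1 \<le> a \<Longrightarrow> a \<le> N \<Longrightarrow> 1 \<le> b \<Longrightarrow> b \<le> N \<Longrightarrow> a = b"
  unfolding cd_def min_def by (auto split: if_splits)
lemma nxt_range: "1 \<le> b \<Longrightarrow> b \<le> N \<Longrightarrow> 1 \<le> nxt N b \<and> nxt N b \<le> N"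
  unfolding nxt_def by auto
lemma prv_range: "1 \<le> b \<Longrightarrow> b \<le> N \<Longrightarrow> 1 \<le> prv N b \<and> prv N b \<le> N"
  unfolding prv_def by auto
lemma nxt_prv: "1 \<le> b \<Longrightarrow> b \<le> N \<Longrightarrow> nxt N (prv N b) = b"
  unfolding nxt_def prv_def by auto
lemma cd_lip1: "1 \<le> a \<Longrightarrow> a \<le> N \<Longrightarrow> 1 \<le> b \<Longrightarrow> b \<le> N \<Longrightarrow> cd N a (nxt N b) \<le> cd N a b + 1"
  unfolding cd_def nxt_def min_def by (auto split: if_splits)
lemma cd_lip2: "1 \<le> a \<Longrightarrow> a \<le> N \<Longrightarrow> 1 \<le> b \<Longrightarrow> b \<le> N \<Longrightarrow> cd N a b \<le> cd N a (nxt N b) + 1"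
  unfolding cd_def nxt_def min_def by (auto split: if_splits)
lemma cd_step:
  assumes a: "1 \<le> a" "a \<le> N" and b: "1 \<le> b" "b \<le> N" and pos: "cd N a b > 0"
  shows "cd N a (nxt N b) + 1 = cd N a b \<or> cd N a (prv N b) + 1 = cd N a b"
proof (cases "a \<le> b")
  case True
  have ne: "a \<noteq> b" using pos by auto
  show ?thesis
  proof (cases "2 * (b - a) \<le> N")
    case True2: True
    have p: "prv N b = b - 1" using ne True a b unfolding prv_def by auto
    have "cd N a b = b - a" using True True2 unfolding cd_def by auto
    moreover have "cd N a (b - 1) = b - 1 - a" using True True2 ne unfolding cd_def by auto
    ultimately show ?thesis using p True ne by auto
  next
    case False2: False
    have c: "cd N a b = N - (b - a)" using True False2 unfolding cd_def by auto
    show ?thesis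
    proof (cases "b = N")
      case True3: True
      have "nxt N b = 1" using True3 unfolding nxt_def by auto
      moreover have "cd N a 1 = a - 1" using False2 True3 a unfolding cd_def by auto
      ultimately show ?thesis using c True3 a by auto
    next
      case False3: False
      have "nxt N b = b + 1" using False3 unfolding nxt_def by auto
      moreover have "cd N a (b + 1) = N - (b + 1 - a)" using False2 False3 True b unfolding cd_def by auto
      ultimately show ?thesis using c False3 True b False2 by auto
    qed
  qed
next
  case False
  show ?thesis
  proof (cases "2 * (a - b) \<le> N")
    case True2: True
    have nb: "b \<noteq> N" using False a by auto
    have "nxt N b = b + 1" using nb unfolding nxt_def by auto
    moreover have "cd N a b = a - b" using False True2 unfolding cd_def by auto
    moreover have "cd N a (b + 1) = a - (b + 1)" using False True2 unfolding cd_def by auto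
    ultimately show ?thesis using False by auto
  next
    case False2: False
    have c: "cd N a b = N - (a - b)" using False False2 unfolding cd_def by auto
    show ?thesis
    proof (cases "b = 1")
      case True3: True
      have "prv N b = N" using True3 unfolding prv_def by auto
      moreover have "cd N a N = N - a" using False2 True3 a unfolding cd_def by auto
      ultimately show ?thesis using c True3 a False by auto
    next
      case False3: False
      have "prv N b = b - 1" using False3 unfolding prv_def by auto
      moreover have "cd N a (b - 1) = N - (a - (b - 1))" using False2 False3 False b unfolding cd_def by auto
      ultimately show ?thesis using c False3 False a b False2 pos by auto
    qed
  qed
qed

locale occ =
  fixes m :: nat and n :: "nat \<Rightarrow> nat"
  assumes m2: "2 \<le> m" and odd5: "\<forall>i\<in>{1..m}. odd (n i) \<and> 5 \<le> n i"
begin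

abbreviation kk :: "nat \<Rightarrow> nat" where "kk i \<equiv> n i div 2"
definition cp :: "nat \<Rightarrow> nat" where "cp i = (n i + 1) div 2 + 1"
definition pref :: "nat \<Rightarrow> nat" where "pref i = (\<Sum>l<i. kk l)"
definition Raw :: "(nat \<times> nat) set" where "Raw = {(i, j). 1 \<le> i \<and> i \<le> m \<and> 1 \<le> j \<and> j \<le> n i}"
abbreviation V where "V \<equiv> occ_verts m n"
abbreviation adj where "adj \<equiv> occ_adj m n"
abbreviation canon where "canon \<equiv> occ_canon n"

definition Dr :: "nat \<Rightarrow> nat \<Rightarrow> nat \<Rightarrow> nat \<Rightarrow> nat" where
  "Dr i0 j0 i j = (if i = i0 then cd (n i) j0 j
     else if i0 < i then cd (n i0) j0 (cp i0) + (pref i - pref (Suc i0)) + cd (n i) 1 j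
     else cd (n i) j (cp i) + (pref i0 - pref (Suc i)) + cd (n i0) 1 j0)"
definition D :: "nat \<times> nat \<Rightarrow> nat \<times> nat \<Rightarrow> nat" where
  "D z x = Dr (fst z) (snd z) (fst x) (snd x)"

lemma n_eq: "1 \<le> i \<Longrightarrow> i \<le> m \<Longrightarrow> n i = 2 * kk i + 1"
  using odd5 by (metis atLeastAtMost_iff odd_two_times_div_two_succ)
lemma kk_ge: "1 \<le> i \<Longrightarrow> i \<le> m \<Longrightarrow> 2 \<le> kk i"
proof -
  assume a: "1 \<le> i" "i \<le> m"
  then have "5 \<le> n i" using odd5 by auto
  then show ?thesis using n_eq[OF a] by linarith
qed
lemma cp_eq: "1 \<le> i \<Longrightarrow> i \<le> m \<Longrightarrow> cp i = kk i + 2"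
  unfolding cp_def using n_eq by fastforce

lemma pref_Suc: "pref (Suc i) = pref i + kk i" unfolding pref_def by simp
lemma pref_mono: "i \<le> i' \<Longrightarrow> pref i \<le> pref i'"
  unfolding pref_def by (rule sum_mono2) auto

lemma D_pair[simp]: "D (i0, j0) (i, j) = Dr i0 j0 i j" by (simp add: D_def)
lemma D_sym: "D z x = D x z"
  unfolding D_def Dr_def by (auto simp: cd_sym)

lemma canon_eq: "canon (i, j) = (if 2 \<le> i \<and> j = 1 then (i - 1, cp (i - 1)) else (i, j))"
  unfolding occ_canon_def cp_def by simp

lemma Raw_iff[simp]: "(i, j) \<in> Raw \<longleftrightarrow> 1 \<le> i \<and> i \<le> m \<and> 1 \<le> j \<and> j \<le> n i"
  unfolding Raw_def by simp

lemma V_char: "V = {p \<in> Raw. \<not> (2 \<le> fst p \<and> snd p = 1)}"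
proof
  show "V \<subseteq> {p \<in> Raw. \<not> (2 \<le> fst p \<and> snd p = 1)}"
  proof
    fix x assume "x \<in> V"
    then obtain i j where ij: "1 \<le> i" "i \<le> m" "1 \<le> j" "j \<le> n i" and x: "x = canon (i, j)"
      unfolding occ_verts_def by auto
    show "x \<in> {p \<in> Raw. \<not> (2 \<le> fst p \<and> snd p = 1)}"
    proof (cases "2 \<le> i \<and> j = 1")
      case True
      then have "x = (i - 1, kk (i - 1) + 2)" using x canon_eq cp_eq ij by auto
      moreover have "n (i - 1) = 2 * kk (i - 1) + 1" "2 \<le> kk (i - 1)"
        using n_eq kk_ge True ij by auto
      ultimately show ?thesis using True ij by auto
    next
      case False
      then show ?thesis using x canon_eq ij by auto
    qed
  qed
next
  show "{p \<in> Raw. \<not> (2 \<le> fst p \<and> snd p = 1)} \<subseteq> V"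
  proof
    fix x assume x: "x \<in> {p \<in> Raw. \<not> (2 \<le> fst p \<and> snd p = 1)}"
    then obtain i j where "x = (i, j)" by (cases x) auto
    then have "x = canon (i, j)" using x canon_eq by auto
    then show "x \<in> V" unfolding occ_verts_def using x \<open>x = (i,j)\<close> by auto
  qed
qed

lemma V_iff: "(i, j) \<in> V \<longleftrightarrow> 1 \<le> i \<and> i \<le> m \<and> 1 \<le> j \<and> j \<le> n i \<and> \<not> (2 \<le> i \<and> j = 1)"
  using V_char by auto

lemma canon_V: "p \<in> Raw \<Longrightarrow> canon p \<in> V"
  unfolding occ_verts_def Raw_def by auto

lemma canon_id: "p \<in> V \<Longrightarrow> canon p = p"
  using V_char by (cases p) (auto simp: canon_eq)

lemma cd1cp: "1 \<le> i \<Longrightarrow> i \<le> m \<Longrightarrow> cd (n i) 1 (cp i) = kk i"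
  using n_eq[of i] cp_eq[of i] unfolding cd_def by auto

lemma D_canon: "z \<in> Raw \<Longrightarrow> p \<in> Raw \<Longrightarrow> D z (canon p) = D z p"
proof -
  assume z: "z \<in> Raw" and p: "p \<in> Raw"
  obtain i0 j0 i j where zz: "z = (i0, j0)" and pp: "p = (i, j)" by (cases z, cases p) auto
  show ?thesis
  proof (cases "2 \<le> i \<and> j = 1")
    case False then show ?thesis using pp by (auto simp: canon_eq)
  next
    case True
    then have c: "canon p = (i - 1, cp (i - 1))" using pp canon_eq by simp
    have ps: "pref i = pref (i - 1) + kk (i - 1)" using pref_Suc[of "i - 1"] True by simp
    have k1: "cd (n (i - 1)) 1 (cp (i - 1)) = kk (i - 1)" using cd1cp[of "i - 1"] True p pp by auto
    have m1: "i0 < i - 1 \<Longrightarrow> pref (Suc i0) \<le> pref (i - 1)" by (rule pref_mono) simp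
    have m2': "i < i0 \<Longrightarrow> pref (Suc i) \<le> pref i0" by (rule pref_mono) simp
    have hi: "i - 1 < i" "Suc (i - 1) = i" "i - 1 \<noteq> i" "\<not> i < i - 1" using True by auto
    consider "i0 = i" | "i0 = i - 1" | "i0 < i - 1" | "i < i0" by linarith
    then show ?thesis
    proof cases
      case 1 then show ?thesis using True zz pp c hi by (simp add: Dr_def cd_sym)
    next
      case 2 then show ?thesis using True zz pp c hi by (simp add: Dr_def cd_sym)
    next
      case 3
      have lt: "i0 < i" "i \<noteq> i0" "i - 1 \<noteq> i0" using 3 by auto
      have "D z (canon p) = cd (n i0) j0 (cp i0) + (pref (i - 1) - pref (Suc i0)) + kk (i - 1)"
        using 3 True zz c k1 lt by (simp add: Dr_def)
      moreover have "D z p = cd (n i0) j0 (cp i0) + (pref i - pref (Suc i0))"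
        using 3 True zz pp lt by (simp add: Dr_def)
      ultimately show ?thesis using ps m1 3 by linarith
    next
      case 4
      have lt: "\<not> i0 < i" "i \<noteq> i0" "i - 1 \<noteq> i0" "\<not> i0 < i - 1" using 4 by auto
      have k2: "cd (n i) 1 (cp i) = kk i" using cd1cp[of i] p pp by auto
      have "D z (canon p) = pref i0 - pref i + cd (n i0) 1 j0"
        using 4 True zz c lt hi by (simp add: Dr_def)
      moreover have "D z p = kk i + (pref i0 - pref (Suc i)) + cd (n i0) 1 j0"
        using 4 True zz pp k2 lt by (simp add: Dr_def)
      moreover have "pref (Suc i) = pref i + kk i" by (rule pref_Suc)
      ultimately show ?thesis using m2' 4 by linarith
    qed
  qed
qed

lemma adj_iff: "adj x y \<longleftrightarrow> (\<exists>i j. 1 \<le> i \<and> i \<le> m \<and> 1 \<le> j \<and> j \<le> n i \<and>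
   ((x = canon (i, j) \<and> y = canon (i, nxt (n i) j)) \<or> (y = canon (i, j) \<and> x = canon (i, nxt (n i) j))))"
  unfolding occ_adj_def cyc_next_def nxt_def by simp

lemma adj_sym: "adj x y = adj y x"
  unfolding adj_iff by blast

lemma adj_V: "adj x y \<Longrightarrow> x \<in> V \<and> y \<in> V"
  unfolding adj_iff using canon_V nxt_range by fastforce

lemma D_row: "z \<in> Raw \<Longrightarrow> 1 \<le> i \<Longrightarrow> i \<le> m \<Longrightarrow>
   \<exists>a c. 1 \<le> a \<and> a \<le> n i \<and> (\<forall>j. D z (i, j) = c + cd (n i) a j)"
proof -
  assume z: "z \<in> Raw" and i: "1 \<le> i" "i \<le> m"
  obtain i0 j0 where zz: "z = (i0, j0)" by (cases z) auto
  have cpr: "1 \<le> cp i \<and> cp i \<le> n i" using cp_eq[OF i] n_eq[OF i] kk_ge[OF i] by simp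
  consider "i = i0" | "i0 < i" | "i < i0" by linarith
  then show ?thesis
  proof cases
    case 1 then show ?thesis using z zz by (rule_tac exI[of _ j0], rule_tac exI[of _ 0]) (auto simp: Dr_def)
  next
    case 2 then show ?thesis using zz i cpr
      by (rule_tac exI[of _ 1], rule_tac exI[of _ "cd (n i0) j0 (cp i0) + (pref i - pref (Suc i0))"])
         (auto simp: Dr_def)
  next
    case 3 then show ?thesis using zz cpr
      by (rule_tac exI[of _ "cp i"], rule_tac exI[of _ "pref i0 - pref (Suc i) + cd (n i0) 1 j0"])
         (auto simp: Dr_def cd_sym)
  qed
qed

lemma D_lip: "z \<in> Raw \<Longrightarrow> 1 \<le> i \<Longrightarrow> i \<le> m \<Longrightarrow> 1 \<le> j \<Longrightarrow> j \<le> n i \<Longrightarrow>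
   D z (i, nxt (n i) j) \<le> D z (i, j) + 1 \<and> D z (i, j) \<le> D z (i, nxt (n i) j) + 1"
  using D_row[of z i] cd_lip1[of _ "n i" j] cd_lip2[of _ "n i" j] by fastforce

lemma D_adj: "z \<in> Raw \<Longrightarrow> adj x y \<Longrightarrow> D z y \<le> D z x + 1"
proof -
  assume z: "z \<in> Raw" and "adj x y"
  then obtain i j where ij: "1 \<le> i" "i \<le> m" "1 \<le> j" "j \<le> n i" and
    e: "(x = canon (i, j) \<and> y = canon (i, nxt (n i) j)) \<or> (y = canon (i, j) \<and> x = canon (i, nxt (n i) j))"
    unfolding adj_iff by blast
  have r1: "(i, j) \<in> Raw" and r2: "(i, nxt (n i) j) \<in> Raw" using ij nxt_range by auto
  show ?thesis using e D_canon[OF z r1] D_canon[OF z r2] D_lip[OF z ij] by auto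
qed

lemma step_lemma: "1 \<le> i \<Longrightarrow> i \<le> m \<Longrightarrow> 1 \<le> a \<Longrightarrow> a \<le> n i \<Longrightarrow> 1 \<le> j \<Longrightarrow> j \<le> n i \<Longrightarrow>
   cd (n i) a j > 0 \<Longrightarrow> \<exists>j'. 1 \<le> j' \<and> j' \<le> n i \<and> cd (n i) a j' + 1 = cd (n i) a j \<and>
      adj (canon (i, j')) (canon (i, j))"
proof -
  assume i: "1 \<le> i" "i \<le> m" and a: "1 \<le> a" "a \<le> n i" and j: "1 \<le> j" "j \<le> n i"
    and pos: "cd (n i) a j > 0"
  from cd_step[OF a j pos] show ?thesis
  proof
    assume h: "cd (n i) a (nxt (n i) j) + 1 = cd (n i) a j"
    have "adj (canon (i, nxt (n i) j)) (canon (i, j))" unfolding adj_iff using i j by blast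
    then show ?thesis using h nxt_range[OF j] by blast
  next
    assume h: "cd (n i) a (prv (n i) j) + 1 = cd (n i) a j"
    have pr: "1 \<le> prv (n i) j" "prv (n i) j \<le> n i" using prv_range[OF j] by auto
    have "adj (canon (i, prv (n i) j)) (canon (i, nxt (n i) (prv (n i) j)))"
      unfolding adj_iff using i pr by blast
    then have "adj (canon (i, prv (n i) j)) (canon (i, j))" using nxt_prv[OF j] by simp
    then show ?thesis using h pr by blast
  qed
qed

lemma pred_gen:
  assumes z: "z \<in> Raw" and i: "1 \<le> i" "i \<le> m" and j: "1 \<le> j" "j \<le> n i"
    and a: "1 \<le> a" "a \<le> n i" and row: "\<forall>j''. D z (i, j'') = c + cd (n i) a j''"
    and pos: "cd (n i) a j > 0"
  shows "\<exists>y\<in>V. adj y (canon (i, j)) \<and> D z y + 1 = D z (canon (i, j))"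
proof -
  obtain j' where j': "1 \<le> j'" "j' \<le> n i" "cd (n i) a j' + 1 = cd (n i) a j"
    "adj (canon (i, j')) (canon (i, j))" using step_lemma[OF i a j pos] by blast
  have "D z (canon (i, j')) = D z (i, j')" by (rule D_canon) (use z i j' in auto)
  moreover have "D z (canon (i, j)) = D z (i, j)" by (rule D_canon) (use z i j in auto)
  ultimately show ?thesis using j' row canon_V[of "(i, j')"] i by (intro bexI[of _ "canon (i, j')"]) auto
qed

lemma D_zero: "z \<in> V \<Longrightarrow> x \<in> V \<Longrightarrow> D z x = 0 \<Longrightarrow> z = x"
proof -
  assume z: "z \<in> V" and x: "x \<in> V" and d: "D z x = 0"
  obtain i0 j0 i j where zz: "z = (i0, j0)" and xx: "x = (i, j)" by (cases z, cases x) auto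
  have zr: "1 \<le> i0" "i0 \<le> m" "1 \<le> j0" "j0 \<le> n i0" "\<not> (2 \<le> i0 \<and> j0 = 1)" using z zz V_iff by auto
  have xr: "1 \<le> i" "i \<le> m" "1 \<le> j" "j \<le> n i" "\<not> (2 \<le> i \<and> j = 1)" using x xx V_iff by auto
  consider "i = i0" | "i0 < i" | "i < i0" by linarith
  then show ?thesis
  proof cases
    case 1 then show ?thesis using d zz xx zr xr cd_zero[of "n i" j0 j] by (auto simp: Dr_def)
  next
    case 2 then have "cd (n i) 1 j = 0" using d zz xx by (auto simp: Dr_def)
    then have "j = 1" using cd_zero[of "n i" 1 j] xr by auto
    then show ?thesis using 2 xr zr by auto
  next
    case 3 then have "cd (n i0) 1 j0 = 0" using d zz xx by (auto simp: Dr_def)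
    then have "j0 = 1" using cd_zero[of "n i0" 1 j0] zr by auto
    then show ?thesis using 3 xr zr by auto
  qed
qed

lemma V_Raw: "p \<in> V \<Longrightarrow> p \<in> Raw" using V_char by auto

lemma D_pred: "z \<in> V \<Longrightarrow> x \<in> V \<Longrightarrow> D z x = Suc d \<Longrightarrow> \<exists>y\<in>V. adj y x \<and> D z y = d"
proof -
  assume z: "z \<in> V" and x: "x \<in> V" and dx: "D z x = Suc d"
  have zR: "z \<in> Raw" using V_Raw[OF z] .
  obtain i0 j0 i j where zz: "z = (i0, j0)" and xx: "x = (i, j)" by (cases z, cases x) auto
  have zr: "1 \<le> i0" "i0 \<le> m" "1 \<le> j0" "j0 \<le> n i0" "\<not> (2 \<le> i0 \<and> j0 = 1)" using z zz V_iff by auto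
  have xr: "1 \<le> i" "i \<le> m" "1 \<le> j" "j \<le> n i" "\<not> (2 \<le> i \<and> j = 1)" using x xx V_iff by auto
  have xc: "canon (i, j) = x" using canon_id[OF x] xx by simp
  have goal: "\<exists>y\<in>V. adj y (canon (i', j')) \<and> D z y + 1 = D z (canon (i', j'))
      \<Longrightarrow> canon (i', j') = x \<Longrightarrow> \<exists>y\<in>V. adj y x \<and> D z y = d" for i' j'
    using dx by auto
  consider "i = i0" | "i0 < i" | "i < i0" by linarith
  then show ?thesis
  proof cases
    case 1
    have "cd (n i) j0 j > 0" using dx zz xx 1 by (auto simp: Dr_def)
    then show ?thesis using pred_gen[OF zR xr(1-4), of j0 0] zr 1 zz goal xc by (auto simp: Dr_def)
  next
    case 2
    have "j \<noteq> 1" using xr zr 2 by auto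
    then have "cd (n i) 1 j > 0" using cd_zero[of "n i" 1 j] xr by fastforce
    then show ?thesis
      using pred_gen[OF zR xr(1-4), of 1 "cd (n i0) j0 (cp i0) + (pref i - pref (Suc i0))"]
        2 zz goal xc xr by (auto simp: Dr_def)
  next
    case 3
    have cpr: "1 \<le> cp i \<and> cp i \<le> n i" using cp_eq[OF xr(1,2)] n_eq[OF xr(1,2)] kk_ge[OF xr(1,2)] by simp
    have rowi: "\<forall>j''. D z (i, j'') = (pref i0 - pref (Suc i) + cd (n i0) 1 j0) + cd (n i) (cp i) j''"
      using zz 3 by (auto simp: Dr_def cd_sym)
    show ?thesis
    proof (cases "cd (n i) (cp i) j > 0")
      case True
      then show ?thesis using pred_gen[OF zR xr(1-4) _ _ rowi] cpr goal xc by auto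
    next
      case False
      then have jc: "j = cp i" using cd_zero[of "n i" "cp i" j] xr cpr by auto
      have s: "1 \<le> Suc i" "Suc i \<le> m" "1 \<le> (1::nat)" "1 \<le> n (Suc i)" using 3 zr
        n_eq[of "Suc i"] by auto
      have xc2: "canon (Suc i, 1) = x" using jc xx xr by (simp add: canon_eq)
      have dd: "D z (Suc i, 1) = Suc d" using D_canon[OF zR, of "(Suc i, 1)"] xc2 dx s by auto
      show ?thesis
      proof (cases "Suc i = i0")
        case True
        have "cd (n (Suc i)) j0 1 > 0" using dd True zz by (auto simp: Dr_def)
        then show ?thesis using pred_gen[OF zR s, of j0 0] zr True zz goal xc2 by (auto simp: Dr_def)
      next
        case False
        then have lt: "Suc i < i0" using 3 by auto
        have cpr2: "1 \<le> cp (Suc i) \<and> cp (Suc i) \<le> n (Suc i)"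
          using cp_eq[OF s(1,2)] n_eq[OF s(1,2)] kk_ge[OF s(1,2)] by simp
        have rowi2: "\<forall>j''. D z (Suc i, j'') = (pref i0 - pref (Suc (Suc i)) + cd (n i0) 1 j0)
              + cd (n (Suc i)) (cp (Suc i)) j''"
          using zz lt by (auto simp: Dr_def cd_sym)
        have "cd (n (Suc i)) (cp (Suc i)) 1 > 0"
          using cd1cp[OF s(1,2)] kk_ge[OF s(1,2)] by (simp add: cd_sym)
        then show ?thesis using pred_gen[OF zR s _ _ rowi2] cpr2 goal xc2 by auto
      qed
    qed
  qed
qed

lemma reach_ge: "z \<in> Raw \<Longrightarrow> (adj ^^ k) z x \<Longrightarrow> D z x \<le> k"
proof (induction k arbitrary: x)
  case 0 then show ?case by (cases z) (auto simp: Dr_def)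
next
  case (Suc k)
  from Suc.prems(2) obtain y where "(adj ^^ k) z y" "adj y x" by (rule relpowp_Suc_E)
  then show ?case using Suc.IH[of y] Suc.prems(1) D_adj[of z y x] by fastforce
qed

lemma reach: "z \<in> V \<Longrightarrow> x \<in> V \<Longrightarrow> D z x = d \<Longrightarrow> (adj ^^ d) z x"
proof (induction d arbitrary: x)
  case 0 then show ?case using D_zero by auto
next
  case (Suc d)
  then obtain y where "y \<in> V" "adj y x" "D z y = d" using D_pred by blast
  then show ?case using Suc.IH[of y] Suc.prems(1) by (blast intro: relpowp_Suc_I)
qed

lemma gdist_eq: "z \<in> V \<Longrightarrow> x \<in> V \<Longrightarrow> gdist adj z x = D z x"
  unfolding gdist_def
  by (rule Least_equality) (auto intro: reach reach_ge V_Raw)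
end
context occ begin

abbreviation SR where "SR \<equiv> strong_resolving_adj V adj"
definition noncut :: "nat \<times> nat \<Rightarrow> bool" where
  "noncut p \<longleftrightarrow> p \<in> V \<and> \<not> (fst p < m \<and> snd p = cp (fst p))"

lemma canon_noncut: "(i', j') \<in> Raw \<Longrightarrow> canon (i', j') = u \<Longrightarrow> noncut u \<Longrightarrow> u = (i', j')"
  unfolding noncut_def using m2 by (auto simp: canon_eq split: if_splits)

lemma nbrs: "noncut (i, j) \<Longrightarrow> adj (i, j) w \<Longrightarrow>
    w = canon (i, nxt (n i) j) \<or> w = canon (i, prv (n i) j)"
proof -
  assume nc: "noncut (i, j)" and a: "adj (i, j) w"
  then obtain i' j' where ij: "1 \<le> i'" "i' \<le> m" "1 \<le> j'" "j' \<le> n i'" and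
    e: "((i, j) = canon (i', j') \<and> w = canon (i', nxt (n i') j')) \<or>
        (w = canon (i', j') \<and> (i, j) = canon (i', nxt (n i') j'))"
    unfolding adj_iff by blast
  from e show ?thesis
  proof
    assume h: "(i, j) = canon (i', j') \<and> w = canon (i', nxt (n i') j')"
    then have "(i, j) = (i', j')" using canon_noncut[of i' j' "(i,j)"] nc ij by auto
    then show ?thesis using h by auto
  next
    assume h: "w = canon (i', j') \<and> (i, j) = canon (i', nxt (n i') j')"
    have "(i', nxt (n i') j') \<in> Raw" using ij nxt_range by auto
    then have "(i, j) = (i', nxt (n i') j')" using canon_noncut[of i' _ "(i,j)"] nc h by auto
    then have "j' = prv (n i) j" "i' = i" using ij unfolding nxt_def prv_def by (auto split: if_splits)
    then show ?thesis using h by auto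
  qed
qed

lemma max_pos:
  assumes nc: "noncut (i, j)" and v: "v \<in> V"
    and le: "\<forall>j''. 1 \<le> j'' \<and> j'' \<le> n i \<longrightarrow> D v (i, j'') \<le> D v (i, j)"
  shows "max_distant adj (i, j) v"
  unfolding max_distant_def
proof (intro allI impI)
  fix w assume a: "adj (i, j) w"
  have u: "(i, j) \<in> V" using nc noncut_def by auto
  then have ir: "1 \<le> i" "i \<le> m" "1 \<le> j" "j \<le> n i" using V_iff by auto
  have w: "w \<in> V" using adj_V[OF a] by auto
  have vR: "v \<in> Raw" using V_Raw[OF v] .
  have "D v w \<le> D v (i, j)"
    using nbrs[OF nc a]
  proof
    assume "w = canon (i, nxt (n i) j)"
    then show ?thesis using D_canon[OF vR, of "(i, nxt (n i) j)"] nxt_range[OF ir(3,4)] ir le by auto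
  next
    assume "w = canon (i, prv (n i) j)"
    then show ?thesis using D_canon[OF vR, of "(i, prv (n i) j)"] prv_range[OF ir(3,4)] ir le by auto
  qed
  then show "gdist adj v w \<le> gdist adj (i, j) v"
    using gdist_eq[OF v w] gdist_eq[OF u v] D_sym[of v "(i,j)"] by simp
qed

lemma max_neg:
  assumes vv: "(i, j) \<in> V" and u: "u \<in> V"
    and gt: "D u (i, nxt (n i) j) > D u (i, j) \<or> D u (i, prv (n i) j) > D u (i, j)"
  shows "\<not> max_distant adj (i, j) u"
proof -
  have ir: "1 \<le> i" "i \<le> m" "1 \<le> j" "j \<le> n i" using vv V_iff by auto
  have uR: "u \<in> Raw" using V_Raw[OF u] .
  have cv: "canon (i, j) = (i, j)" using canon_id[OF vv] .
  have a1: "adj (i, j) (canon (i, nxt (n i) j))" unfolding adj_iff using ir cv by metis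
  have pr: "1 \<le> prv (n i) j" "prv (n i) j \<le> n i" using prv_range[OF ir(3,4)] by auto
  have "adj (canon (i, nxt (n i) (prv (n i) j))) (canon (i, prv (n i) j))"
    unfolding adj_iff using ir pr by blast
  then have a2: "adj (i, j) (canon (i, prv (n i) j))" using nxt_prv[OF ir(3,4)] cv by simp
  have e1: "D u (canon (i, nxt (n i) j)) = D u (i, nxt (n i) j)"
    using D_canon[OF uR, of "(i, nxt (n i) j)"] nxt_range[OF ir(3,4)] ir by auto
  have e2: "D u (canon (i, prv (n i) j)) = D u (i, prv (n i) j)"
    using D_canon[OF uR, of "(i, prv (n i) j)"] pr ir by auto
  have g: "gdist adj (i, j) u = D u (i, j)" using gdist_eq[OF vv u] D_sym by simp
  show ?thesis unfolding max_distant_def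
    using gt a1 a2 e1 e2 g gdist_eq[OF u] adj_V[OF a1] adj_V[OF a2] by (metis not_le)
qed

lemma SR_row:
  assumes nc1: "noncut (i, j)" and nc2: "noncut (i, j')" and c: "cd (n i) j j' = kk i"
  shows "SR (i, j) (i, j')"
proof -
  have u: "(i, j) \<in> V" and v: "(i, j') \<in> V" using nc1 nc2 noncut_def by auto
  have ir: "1 \<le> i" "i \<le> m" "1 \<le> j" "j \<le> n i" "1 \<le> j'" "j' \<le> n i" using u v V_iff by auto
  have "max_distant adj (i, j) (i, j')"
    by (rule max_pos[OF nc1 v]) (use c cd_le[of j' "n i"] ir in \<open>auto simp: Dr_def cd_sym\<close>)
  moreover have "max_distant adj (i, j') (i, j)"
    by (rule max_pos[OF nc2 u]) (use c cd_le[of j "n i"] ir in \<open>auto simp: Dr_def cd_sym\<close>)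
  ultimately show ?thesis unfolding strong_resolving_adj_def mutually_max_distant_def using u v by auto
qed

lemma SR_cross:
  assumes nc1: "noncut (i, j)" and nc2: "noncut (i', j')" and lt: "i < i'"
    and c1: "cd (n i) j (cp i) = kk i" and c2: "cd (n i') 1 j' = kk i'"
  shows "SR (i, j) (i', j')"
proof -
  have u: "(i, j) \<in> V" and v: "(i', j') \<in> V" using nc1 nc2 noncut_def by auto
  have ir: "1 \<le> i" "i \<le> m" "1 \<le> j" "j \<le> n i" "1 \<le> j'" "j' \<le> n i'" "i' \<le> m" using u v V_iff by auto
  have cpr: "1 \<le> cp i \<and> cp i \<le> n i" using cp_eq[OF ir(1,2)] n_eq[OF ir(1,2)] kk_ge[OF ir(1,2)] by simp
  have "max_distant adj (i, j) (i', j')"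
    by (rule max_pos[OF nc1 v]) (use lt c1 cd_le[of _ "n i" "cp i"] cpr in \<open>auto simp: Dr_def\<close>)
  moreover have "max_distant adj (i', j') (i, j)"
    by (rule max_pos[OF nc2 u]) (use lt c2 cd_le[of 1 "n i'"] ir in \<open>auto simp: Dr_def\<close>)
  ultimately show ?thesis unfolding strong_resolving_adj_def mutually_max_distant_def using u v by auto
qed



definition inI :: "nat \<times> nat \<Rightarrow> bool" where
  "inI p \<longleftrightarrow> (fst p = 1 \<and> 3 \<le> snd p \<and> snd p \<le> kk 1 + 2) \<or>
     (2 \<le> fst p \<and> fst p \<le> m \<and> kk (fst p) + 2 \<le> snd p \<and> snd p \<le> n (fst p))"

lemma noMMD_same:
  assumes u: "inI (i, j)" and v: "inI (i, j')" and le: "j \<le> j'" and uV: "(i, j) \<in> V" and vV: "(i, j') \<in> V"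
  shows "\<not> max_distant adj (i, j') (i, j)"
proof -
  have ir: "1 \<le> i" "i \<le> m" using uV V_iff by auto
  have ne: "n i = 2 * kk i + 1" and k2: "2 \<le> kk i" using n_eq[OF ir] kk_ge[OF ir] by auto
  have "cd (n i) j (nxt (n i) j') > cd (n i) j j'"
  proof (cases "i = 1")
    case True
    then have r: "3 \<le> j" "j' \<le> kk i + 2" using u v unfolding inI_def by auto
    have "nxt (n i) j' = j' + 1" using r ne k2 unfolding nxt_def by auto
    moreover have "cd (n i) j (j' + 1) = j' + 1 - j" using r le ne unfolding cd_def by auto
    moreover have "cd (n i) j j' = j' - j" using r le ne unfolding cd_def by auto
    ultimately show ?thesis using le by auto
  next
    case False
    then have r: "kk i + 2 \<le> j" "j' \<le> n i" using u v ir unfolding inI_def by auto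
    have c: "cd (n i) j j' = j' - j" using r le ne unfolding cd_def by auto
    show ?thesis
    proof (cases "j' = n i")
      case True
      then have "nxt (n i) j' = 1" unfolding nxt_def by auto
      moreover have "cd (n i) j 1 = n i + 1 - j" using r ne unfolding cd_def by auto
      ultimately show ?thesis using c True r le by auto
    next
      case False
      then have "nxt (n i) j' = j' + 1" unfolding nxt_def by auto
      moreover have "cd (n i) j (j' + 1) = j' + 1 - j" using r le ne False unfolding cd_def by auto
      ultimately show ?thesis using c le by auto
    qed
  qed
  then show ?thesis by (intro max_neg[OF vV uV]) (auto simp: Dr_def)
qed

lemma noMMD_cross:
  assumes u: "inI (i, j)" and uV: "(i, j) \<in> V" and vV: "(i', j') \<in> V" and lt: "i < i'"
  shows "\<not> max_distant adj (i, j) (i', j')"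
proof -
  have ir: "1 \<le> i" "i \<le> m" using uV V_iff by auto
  have ne: "n i = 2 * kk i + 1" and k2: "2 \<le> kk i" and cpe: "cp i = kk i + 2"
    using n_eq[OF ir] kk_ge[OF ir] cp_eq[OF ir] by auto
  have row: "\<And>q. Dr i' j' i q = cd (n i) q (cp i) + (pref i' - pref (Suc i)) + cd (n i') 1 j'"
    using lt by (simp add: Dr_def)
  have "cd (n i) (prv (n i) j) (cp i) > cd (n i) j (cp i) \<or> cd (n i) (nxt (n i) j) (cp i) > cd (n i) j (cp i)"
  proof (cases "i = 1")
    case True
    then have r: "3 \<le> j" "j \<le> kk i + 2" using u unfolding inI_def by auto
    have "prv (n i) j = j - 1" using r unfolding prv_def by auto
    moreover have "cd (n i) (j - 1) (cp i) = kk i + 3 - j" using r ne cpe unfolding cd_def by auto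
    ultimately have e: "cd (n i) (prv (n i) j) (cp i) = kk i + 3 - j" by simp
    have "cd (n i) j (cp i) = kk i + 2 - j" using r ne cpe unfolding cd_def by auto
    then show ?thesis using r e by linarith
  next
    case False
    then have r: "kk i + 2 \<le> j" "j \<le> n i" using u ir unfolding inI_def by auto
    have c: "cd (n i) j (cp i) = j - (kk i + 2)" using r ne cpe unfolding cd_def by auto
    show ?thesis
    proof (cases "j = n i")
      case True
      then have "nxt (n i) j = 1" unfolding nxt_def by auto
      moreover have "cd (n i) 1 (cp i) = kk i" using cpe ne unfolding cd_def by auto
      ultimately have e: "cd (n i) (nxt (n i) j) (cp i) = kk i" by simp
      have "j - (kk i + 2) < kk i" using True ne k2 by linarith
      then show ?thesis using c e by linarith
    next
      case False
      then have "nxt (n i) j = j + 1" unfolding nxt_def by auto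
      moreover have "cd (n i) (j + 1) (cp i) = j + 1 - (kk i + 2)" using r ne cpe False unfolding cd_def by auto
      ultimately show ?thesis using c r by auto
    qed
  qed
  then show ?thesis by (intro max_neg[OF uV vV]) (auto simp: row)
qed

lemma noMMD:
  assumes u: "inI u" and v: "inI v" and uV: "u \<in> V" and vV: "v \<in> V"
  shows "\<not> mutually_max_distant adj u v"
proof -
  obtain i j i' j' where uu: "u = (i, j)" and vv: "v = (i', j')" by (cases u, cases v) auto
  consider "i = i' \<and> j \<le> j'" | "i = i' \<and> j' \<le> j" | "i < i'" | "i' < i" by linarith
  then show ?thesis
  proof cases
    case 1 then show ?thesis using noMMD_same[of i j j'] u v uV vV uu vv
      unfolding mutually_max_distant_def by auto
  next
    case 2 then show ?thesis using noMMD_same[of i j' j] u v uV vV uu vv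
      unfolding mutually_max_distant_def by auto
  next
    case 3 then show ?thesis using noMMD_cross[of i j i' j'] u uV vV uu vv
      unfolding mutually_max_distant_def by auto
  next
    case 4 then show ?thesis using noMMD_cross[of i' j' i j] v uV vV uu vv
      unfolding mutually_max_distant_def by auto
  qed
qed

definition AA :: "nat \<Rightarrow> nat set" where
  "AA i = (if i = 1 then {1, 2} \<union> {kk 1 + 3..n 1} else {2..kk i + 1})"
definition C0 :: "(nat \<times> nat) set" where "C0 = Sigma {1..m} AA"

lemma C0_cover: "is_vertex_cover V SR C0"
  unfolding is_vertex_cover_def
proof (intro conjI ballI impI)
  show "C0 \<subseteq> V"
  proof
    fix p assume "p \<in> C0"
    then obtain i j where p: "p = (i, j)" "1 \<le> i" "i \<le> m" "j \<in> AA i" unfolding C0_def by auto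
    have "n i = 2 * kk i + 1" "2 \<le> kk i" using n_eq[OF p(2,3)] kk_ge[OF p(2,3)] by auto
    then show "p \<in> V" using p by (auto simp: AA_def V_iff split: if_splits)
  qed
next
  fix u v assume uV: "u \<in> V" and vV: "v \<in> V" and s: "SR u v"
  have nI: "p \<in> V \<Longrightarrow> p \<notin> C0 \<Longrightarrow> inI p" for p
  proof -
    assume pV: "p \<in> V" and pn: "p \<notin> C0"
    obtain i j where pp: "p = (i, j)" by (cases p) auto
    have r: "1 \<le> i" "i \<le> m" "1 \<le> j" "j \<le> n i" "\<not> (2 \<le> i \<and> j = 1)" using pV pp V_iff by auto
    have "j \<notin> AA i" using pn pp r unfolding C0_def by auto
    then show "inI p" using r pp unfolding AA_def inI_def by (auto split: if_splits)
  qed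
  show "u \<in> C0 \<or> v \<in> C0"
  proof (rule ccontr)
    assume "\<not> (u \<in> C0 \<or> v \<in> C0)"
    then have "inI u" "inI v" using nI uV vV by auto
    then show False using noMMD[of u v] uV vV s unfolding strong_resolving_adj_def by auto
  qed
qed

end
context occ begin

definition SS :: nat where "SS = (\<Sum>i = 2..m - 1. kk i)"

lemma T_eq: "m - 1 + n 1 div 2 + n m div 2 + (\<Sum>i = 2..m - 1. (n i - 2) div 2) = kk 1 + kk m + SS + 1"
proof -
  have "\<forall>i\<in>{2..m - 1}. (n i - 2) div 2 + 1 = kk i"
  proof
    fix i assume i: "i \<in> {2..m - 1}"
    then have ir: "1 \<le> i" "i \<le> m" by auto
    show "(n i - 2) div 2 + 1 = kk i" using n_eq[OF ir] kk_ge[OF ir] by simp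
  qed
  then have "(\<Sum>i = 2..m - 1. (n i - 2) div 2 + 1) = SS" unfolding SS_def by (intro sum.cong) auto
  moreover have "(\<Sum>i = 2..m - 1. (n i - 2) div 2 + 1) = (\<Sum>i = 2..m - 1. (n i - 2) div 2) + (m - 2)"
    by (subst sum.distrib) simp
  ultimately have "(\<Sum>i = 2..m - 1. (n i - 2) div 2) + (m - 2) = SS" by simp
  then show ?thesis using m2 by linarith
qed

lemma sum_split: "(\<Sum>i\<in>{1..m}. f i) = f 1 + (\<Sum>i = 2..m - 1. f i) + f m"
proof -
  have a: "{1..m} = insert 1 {2..m}" using m2 by auto
  have b: "{2..m} = insert m {2..m - 1}" using m2 by auto
  show ?thesis unfolding a b using m2 by (simp add: ac_simps)
qed

lemma card_C0: "card C0 = kk 1 + kk m + SS + 1"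
proof -
  have fin: "\<forall>i\<in>{1..m}. finite (AA i)" unfolding AA_def by auto
  have c1: "card (AA 1) = kk 1 + 1"
  proof -
    have ne: "n 1 = 2 * kk 1 + 1" "2 \<le> kk 1" using n_eq[of 1] kk_ge[of 1] m2 by auto
    have "card ({1, 2} \<union> {kk 1 + 3..n 1}) = card {1::nat, 2} + card {kk 1 + 3..n 1}"
      by (rule card_Un_disjoint) auto
    then show ?thesis unfolding AA_def using ne by simp
  qed
  have ci: "i \<noteq> 1 \<Longrightarrow> card (AA i) = kk i" for i unfolding AA_def by simp
  have "card C0 = (\<Sum>i\<in>{1..m}. card (AA i))" unfolding C0_def using fin by simp
  also have "\<dots> = card (AA 1) + (\<Sum>i = 2..m - 1. card (AA i)) + card (AA m)" by (rule sum_split)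
  also have "(\<Sum>i = 2..m - 1. card (AA i)) = SS" unfolding SS_def by (rule sum.cong) (auto simp: ci)
  finally show ?thesis using c1 ci[of m] m2 by simp
qed

end

lemma match_bound:
  assumes "finite S" "inj_on f J" "inj_on g J" "f ` J \<inter> g ` J = {}"
    "\<forall>j\<in>J. f j \<in> C \<or> g j \<in> C" "E \<subseteq> C" "E \<inter> (f ` J \<union> g ` J) = {}" "f ` J \<union> g ` J \<union> E \<subseteq> S"
    "finite J"
  shows "card J + card E \<le> card (C \<inter> S)"
proof -
  define h where "h j = (if f j \<in> C then f j else g j)" for j
  have inj: "inj_on h J"
  proof (rule inj_onI)
    fix x y assume x: "x \<in> J" and y: "y \<in> J" and e: "h x = h y"
    have d: "f a \<noteq> g b" if "a \<in> J" "b \<in> J" for a b using assms(4) that by blast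
    show "x = y"
    proof (cases "f x \<in> C")
      case True note tx = True
      show ?thesis
      proof (cases "f y \<in> C")
        case True then have "f x = f y" using e tx by (simp add: h_def)
        then show ?thesis using assms(2) x y by (simp add: inj_on_def)
      next
        case False then have "f x = g y" using e tx by (simp add: h_def)
        then show ?thesis using d x y by blast
      qed
    next
      case False note fx = False
      show ?thesis
      proof (cases "f y \<in> C")
        case True then have "g x = f y" using e fx by (simp add: h_def)
        then show ?thesis using d x y by metis
      next
        case False then have "g x = g y" using e fx by (simp add: h_def)
        then show ?thesis using assms(3) x y by (simp add: inj_on_def)
      qed
    qed
  qed
  have hJ: "h ` J \<subseteq> C \<inter> S" using assms(5,8) by (auto simp: h_def)
  have hE: "h ` J \<inter> E = {}" using assms(7) by (auto simp: h_def)
  have fE: "finite E" using assms(1,8) finite_subset by blast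
  have "card (h ` J \<union> E) = card J + card E"
    using card_Un_disjoint[of "h ` J" E] hE fE assms(9) card_image[OF inj] by auto
  moreover have "card (h ` J \<union> E) \<le> card (C \<inter> S)"
    by (rule card_mono) (use assms(1,6,8) hJ in auto)
  ultimately show ?thesis by simp
qed

lemma count_ex:
  assumes m2: "2 \<le> (m::nat)" and cr: "\<And>i i'. 1 \<le> i \<Longrightarrow> i < i' \<Longrightarrow> i' \<le> m \<Longrightarrow> X i \<or> Y i'"
    and ex: "\<And>i. 1 \<le> i \<Longrightarrow> i \<le> m \<Longrightarrow> (i < m \<and> X i) \<or> (1 < i \<and> Y i) \<Longrightarrow> P i"
  shows "m - 1 \<le> card {i\<in>{1..m}. P i}"
proof -
  have "\<exists>t\<in>{1..m}. \<forall>i\<in>{1..m}. i \<noteq> t \<longrightarrow> P i"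
  proof (cases "\<forall>i. 1 \<le> i \<and> i < m \<longrightarrow> X i")
    case True then show ?thesis using ex m2 by (intro bexI[of _ m]) auto
  next
    case False
    define t where "t = (LEAST i. 1 \<le> i \<and> i < m \<and> \<not> X i)"
    have t: "1 \<le> t \<and> t < m \<and> \<not> X t" unfolding t_def using False by (metis (mono_tags, lifting) LeastI)
    have lt: "1 \<le> i \<Longrightarrow> i < t \<Longrightarrow> X i" for i
      using not_less_Least[of i "\<lambda>i. 1 \<le> i \<and> i < m \<and> \<not> X i"] t unfolding t_def by auto
    show ?thesis
    proof (intro bexI[of _ t] ballI impI)
      fix i assume i: "i \<in> {1..m}" "i \<noteq> t"
      show "P i"
      proof (cases "i < t")
        case True then show ?thesis using lt[of i] i t ex[of i] by auto
      next
        case False then have "Y i" using cr[of t i] t i by auto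
        then show ?thesis using ex[of i] i t False by auto
      qed
    qed (use t in auto)
  qed
  then obtain t where t: "t \<in> {1..m}" "\<forall>i\<in>{1..m}. i \<noteq> t \<longrightarrow> P i" by blast
  have "{1..m} - {t} \<subseteq> {i\<in>{1..m}. P i}" using t by auto
  then have "card ({1..m} - {t}) \<le> card {i\<in>{1..m}. P i}" by (intro card_mono) auto
  then show ?thesis using t by simp
qed

context occ begin

lemma cov_edge: "is_vertex_cover V SR C \<Longrightarrow> SR u v \<Longrightarrow> u \<in> C \<or> v \<in> C"
  unfolding is_vertex_cover_def strong_resolving_adj_def by blast

lemma noncut_iff: "noncut (i, j) \<longleftrightarrow> 1 \<le> i \<and> i \<le> m \<and> 1 \<le> j \<and> j \<le> n i \<and> \<not> (2 \<le> i \<and> j = 1)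
    \<and> \<not> (i < m \<and> j = kk i + 2)"
  unfolding noncut_def using V_iff cp_eq by auto

lemma A_edge: "1 \<le> i \<Longrightarrow> i \<le> m \<Longrightarrow> 2 \<le> j \<Longrightarrow> j \<le> kk i + 1 \<Longrightarrow> (j = 2 \<longrightarrow> i = m) \<Longrightarrow>
    SR (i, j) (i, j + kk i)"
proof -
  assume a: "1 \<le> i" "i \<le> m" "2 \<le> j" "j \<le> kk i + 1" "j = 2 \<longrightarrow> i = m"
  have ne: "n i = 2 * kk i + 1" "2 \<le> kk i" using n_eq[OF a(1,2)] kk_ge[OF a(1,2)] by auto
  show ?thesis
  proof (rule SR_row)
    show "noncut (i, j)" using a ne by (simp add: noncut_iff)
    show "noncut (i, j + kk i)" using a ne by (auto simp: noncut_iff)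
    show "cd (n i) j (j + kk i) = kk i" using ne unfolding cd_def by simp
  qed
qed

lemma B_edge: "1 \<le> i \<Longrightarrow> i \<le> m \<Longrightarrow> 2 \<le> j \<Longrightarrow> j \<le> kk i \<Longrightarrow> SR (i, j) (i, j + kk i + 1)"
proof -
  assume a: "1 \<le> i" "i \<le> m" "2 \<le> j" "j \<le> kk i"
  have ne: "n i = 2 * kk i + 1" "2 \<le> kk i" using n_eq[OF a(1,2)] kk_ge[OF a(1,2)] by auto
  show ?thesis
  proof (rule SR_row)
    show "noncut (i, j)" using a ne by (simp add: noncut_iff)
    show "noncut (i, j + kk i + 1)" using a ne by (auto simp: noncut_iff)
    show "cd (n i) j (j + kk i + 1) = kk i" using ne unfolding cd_def by simp
  qed
qed

lemma E1_edge: "SR (1, kk 1 + 1) (1, 1)"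
proof -
  have a: "1 \<le> (1::nat)" "1 \<le> m" using m2 by auto
  have ne: "n 1 = 2 * kk 1 + 1" "2 \<le> kk 1" using n_eq[OF a] kk_ge[OF a] by auto
  show ?thesis
  proof (rule SR_row)
    show "noncut (1, kk 1 + 1)" using a ne by (simp add: noncut_iff)
    show "noncut (1, 1)" using a ne by (auto simp: noncut_iff)
    show "cd (n 1) (kk 1 + 1) 1 = kk 1" using ne unfolding cd_def by simp
  qed
qed

definition Row :: "nat \<Rightarrow> (nat \<times> nat) set" where "Row i = {i} \<times> {..n i}"

lemma rowA:
  assumes cov: "is_vertex_cover V SR C" and i: "1 \<le> i" "i \<le> m" and a: "2 \<le> a" "a \<le> 3"
    and a2: "a = 2 \<longrightarrow> i = m" and E: "E \<subseteq> C" "\<forall>p\<in>E. fst p = i \<and> snd p < a"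
  shows "card {a..kk i + 1} + card E \<le> card (C \<inter> Row i)"
proof -
  have ne: "n i = 2 * kk i + 1" "2 \<le> kk i" using n_eq[OF i] kk_ge[OF i] by auto
  show ?thesis
  proof (rule match_bound[where f = "\<lambda>j. (i, j)" and g = "\<lambda>j. (i, j + kk i)"])
    show "\<forall>j\<in>{a..kk i + 1}. (i, j) \<in> C \<or> (i, j + kk i) \<in> C"
      using cov_edge[OF cov A_edge[OF i]] a a2 by auto
    show "E \<inter> ((\<lambda>j. (i, j)) ` {a..kk i + 1} \<union> (\<lambda>j. (i, j + kk i)) ` {a..kk i + 1}) = {}"
      using E(2) a ne by force
    show "(\<lambda>j. (i, j)) ` {a..kk i + 1} \<union> (\<lambda>j. (i, j + kk i)) ` {a..kk i + 1} \<union> E \<subseteq> Row i"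
      using E(2) a ne unfolding Row_def by force
  qed (use E ne a in \<open>auto simp: Row_def inj_on_def\<close>)
qed

lemma rowB:
  assumes cov: "is_vertex_cover V SR C" and i: "1 \<le> i" "i \<le> m"
    and E: "E \<subseteq> C" "\<forall>p\<in>E. fst p = i \<and> (snd p = kk i + 1 \<or> snd p = kk i + 2)"
  shows "card {2..kk i} + card E \<le> card (C \<inter> Row i)"
proof -
  have ne: "n i = 2 * kk i + 1" "2 \<le> kk i" using n_eq[OF i] kk_ge[OF i] by auto
  show ?thesis
  proof (rule match_bound[where f = "\<lambda>j. (i, j)" and g = "\<lambda>j. (i, j + kk i + 1)"])
    show "\<forall>j\<in>{2..kk i}. (i, j) \<in> C \<or> (i, j + kk i + 1) \<in> C"
      using cov_edge[OF cov B_edge[OF i]] by auto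
    show "E \<inter> ((\<lambda>j. (i, j)) ` {2..kk i} \<union> (\<lambda>j. (i, j + kk i + 1)) ` {2..kk i}) = {}"
      using E(2) ne by force
    show "(\<lambda>j. (i, j)) ` {2..kk i} \<union> (\<lambda>j. (i, j + kk i + 1)) ` {2..kk i} \<union> E \<subseteq> Row i"
      using E(2) ne unfolding Row_def by force
  qed (use E ne in \<open>auto simp: Row_def inj_on_def\<close>)
qed

lemma row1:
  assumes cov: "is_vertex_cover V SR C"
  shows "kk 1 \<le> card (C \<inter> Row 1)"
proof -
  have a: "1 \<le> (1::nat)" "1 \<le> m" using m2 by auto
  have ne: "n 1 = 2 * kk 1 + 1" "2 \<le> kk 1" using n_eq[OF a] kk_ge[OF a] by auto
  define g where "g j = (1::nat, if j \<le> kk 1 then j + kk 1 + 1 else 1)" for j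
  have "card {2..kk 1 + 1} + card ({} :: (nat \<times> nat) set) \<le> card (C \<inter> Row 1)"
  proof (rule match_bound[where f = "\<lambda>j. (1, j)" and g = g])
    show "\<forall>j\<in>{2..kk 1 + 1}. (1, j) \<in> C \<or> g j \<in> C"
    proof
      fix j assume j: "j \<in> {2..kk 1 + 1}"
      show "(1, j) \<in> C \<or> g j \<in> C"
      proof (cases "j \<le> kk 1")
        case True then show ?thesis using cov_edge[OF cov B_edge[OF a, of j]] j by (simp add: g_def)
      next
        case False then have "j = kk 1 + 1" using j by auto
        then show ?thesis using cov_edge[OF cov E1_edge] False by (simp add: g_def)
      qed
    qed
    show "inj_on g {2..kk 1 + 1}" unfolding inj_on_def g_def by auto
    show "(\<lambda>j. (1, j)) ` {2..kk 1 + 1} \<inter> g ` {2..kk 1 + 1} = {}" unfolding g_def by (force split: if_splits)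
    show "(\<lambda>j. (1, j)) ` {2..kk 1 + 1} \<union> g ` {2..kk 1 + 1} \<union> {} \<subseteq> Row 1"
      unfolding g_def Row_def using ne by auto
  qed (auto simp: Row_def inj_on_def)
  then show ?thesis by simp
qed

end
context occ begin

definition Xs :: "nat \<Rightarrow> (nat \<times> nat) set" where
  "Xs i = (if i = 1 then {(1, 1), (1, 2)} else {(i, 2)})"
definition Ys :: "nat \<Rightarrow> (nat \<times> nat) set" where
  "Ys i = (if i = m then {(m, kk m + 1), (m, kk m + 2)} else {(i, kk i + 1)})"

lemma cross_SR: "1 \<le> i \<Longrightarrow> i < i' \<Longrightarrow> i' \<le> m \<Longrightarrow> x \<in> Xs i \<Longrightarrow> y \<in> Ys i' \<Longrightarrow> SR x y"
proof -
  assume a: "1 \<le> i" "i < i'" "i' \<le> m" and x: "x \<in> Xs i" and y: "y \<in> Ys i'"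
  have ir: "1 \<le> i" "i \<le> m" and ir': "1 \<le> i'" "i' \<le> m" using a by auto
  note ne = n_eq[OF ir] kk_ge[OF ir] cp_eq[OF ir]
  note ne' = n_eq[OF ir'] kk_ge[OF ir']
  obtain j where xj: "x = (i, j)" "j = 1 \<or> j = 2" "j = 1 \<longrightarrow> i = 1"
  proof (cases "i = 1")
    case True then show ?thesis using that x unfolding Xs_def by auto
  next
    case False then show ?thesis using that x unfolding Xs_def by auto
  qed
  obtain j' where yj: "y = (i', j')" "j' = kk i' + 1 \<or> j' = kk i' + 2" "j' = kk i' + 2 \<longrightarrow> i' = m"
  proof (cases "i' = m")
    case True
    then have "y = (i', kk i' + 1) \<or> y = (i', kk i' + 2)" using y unfolding Ys_def by simp
    then show ?thesis using that True by blast
  next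
    case False
    then have "y = (i', kk i' + 1)" using y unfolding Ys_def by simp
    then show ?thesis using that by simp
  qed
  show ?thesis unfolding xj(1) yj(1)
  proof (rule SR_cross)
    show "noncut (i, j)" using xj a ne by (auto simp: noncut_iff)
    show "noncut (i', j')" using yj a ne' by (auto simp: noncut_iff)
    show "i < i'" by fact
    show "cd (n i) j (cp i) = kk i" using xj ne unfolding cd_def by auto
    show "cd (n i') 1 j' = kk i'" using yj ne' unfolding cd_def by auto
  qed
qed

lemma cross_cov: "is_vertex_cover V SR C \<Longrightarrow> 1 \<le> i \<Longrightarrow> i < i' \<Longrightarrow> i' \<le> m \<Longrightarrow> Xs i \<subseteq> C \<or> Ys i' \<subseteq> C"
  using cross_SR cov_edge by blast

definition ex :: "(nat \<times> nat) set \<Rightarrow> nat \<Rightarrow> bool" where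
  "ex C i = (if i = 1 then (1, 1) \<in> C \<and> (1, 2) \<in> C else if i = m then (m, kk m + 1) \<in> C \<and> (m, kk m + 2) \<in> C
     else (i, 2) \<in> C \<or> (i, kk i + 1) \<in> C)"
definition bb :: "nat \<Rightarrow> nat" where
  "bb i = (if i = 1 then kk 1 else if i = m then kk m else kk i - 1)"

lemma ex_count: "is_vertex_cover V SR C \<Longrightarrow> m - 1 \<le> card {i\<in>{1..m}. ex C i}"
proof (rule count_ex[where X = "\<lambda>i. Xs i \<subseteq> C" and Y = "\<lambda>i. Ys i \<subseteq> C"])
  show "2 \<le> m" by (rule m2)
next
  fix i i' assume "is_vertex_cover V SR C" "1 \<le> i" "i < i'" "i' \<le> m"
  then show "Xs i \<subseteq> C \<or> Ys i' \<subseteq> C" by (rule cross_cov)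
next
  fix i assume "1 \<le> i" "i \<le> m" "i < m \<and> Xs i \<subseteq> C \<or> 1 < i \<and> Ys i \<subseteq> C"
  then show "ex C i" unfolding ex_def Xs_def Ys_def by (auto split: if_splits)
qed

lemma row_bound:
  assumes cov: "is_vertex_cover V SR C" and i: "1 \<le> i" "i \<le> m"
  shows "bb i + (if ex C i then 1 else 0) \<le> card (C \<inter> Row i)"
proof -
  have ne: "n i = 2 * kk i + 1" "2 \<le> kk i" using n_eq[OF i] kk_ge[OF i] by auto
  have m1: "1 \<noteq> m" using m2 by auto
  consider "i = 1" | "i = m" | "1 < i \<and> i < m" using i m1 by linarith
  then show ?thesis
  proof cases
    case 1
    show ?thesis
    proof (cases "ex C i")
      case True
      then have E: "{(1, 1), (1, 2)} \<subseteq> C" using 1 unfolding ex_def by auto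
      have "card {3..kk i + 1} + card {(1::nat, 1::nat), (1, 2)} \<le> card (C \<inter> Row i)"
        by (rule rowA[OF cov i]) (use E 1 in auto)
      then show ?thesis using True 1 ne unfolding bb_def by simp
    next
      case False then show ?thesis using row1[OF cov] 1 unfolding bb_def by simp
    qed
  next
    case 2
    show ?thesis
    proof (cases "ex C i")
      case True
      then have E: "{(m, kk m + 1), (m, kk m + 2)} \<subseteq> C" using 2 m1 unfolding ex_def by auto
      have "card {2..kk i} + card {(m, kk m + 1), (m, kk m + 2)} \<le> card (C \<inter> Row i)"
        by (rule rowB[OF cov i]) (use E 2 in auto)
      then show ?thesis using True 2 ne m1 unfolding bb_def by simp
    next
      case False
      have "card {2..kk i + 1} + card ({} :: (nat \<times> nat) set) \<le> card (C \<inter> Row i)"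
        by (rule rowA[OF cov i]) (use 2 in auto)
      then show ?thesis using False 2 m1 unfolding bb_def by simp
    qed
  next
    case 3
    then have i1: "i \<noteq> 1" "i \<noteq> m" by auto
    show ?thesis
    proof (cases "(i, 2) \<in> C")
      case True
      have "card {3..kk i + 1} + card {(i, 2::nat)} \<le> card (C \<inter> Row i)"
        by (rule rowA[OF cov i]) (use True 3 in auto)
      then show ?thesis using i1 ne unfolding bb_def by auto
    next
      case F1: False
      show ?thesis
      proof (cases "(i, kk i + 1) \<in> C")
        case True
        have "card {2..kk i} + card {(i, kk i + 1)} \<le> card (C \<inter> Row i)"
          by (rule rowB[OF cov i]) (use True in auto)
        then show ?thesis using i1 ne unfolding bb_def by auto
      next
        case False
        have "card {3..kk i + 1} + card ({} :: (nat \<times> nat) set) \<le> card (C \<inter> Row i)"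
          by (rule rowA[OF cov i]) (use 3 in auto)
        then show ?thesis using i1 ne F1 False unfolding bb_def ex_def by simp
      qed
    qed
  qed
qed

lemma lower:
  assumes cov: "is_vertex_cover V SR C" and fin: "finite C"
  shows "kk 1 + kk m + SS + 1 \<le> card C"
proof -
  let ?e = "\<lambda>i. if ex C i then 1 else (0::nat)"
  have "(\<Sum>i\<in>{1..m}. bb i + ?e i) \<le> (\<Sum>i\<in>{1..m}. card (C \<inter> Row i))"
    by (rule sum_mono) (use row_bound[OF cov] in auto)
  also have "\<dots> = card (\<Union>i\<in>{1..m}. C \<inter> Row i)"
    by (rule card_UN_disjoint[symmetric]) (use fin in \<open>auto simp: Row_def\<close>)
  also have "\<dots> \<le> card C" by (rule card_mono[OF fin]) auto
  finally have s: "(\<Sum>i\<in>{1..m}. bb i) + (\<Sum>i\<in>{1..m}. ?e i) \<le> card C" by (simp add: sum.distrib)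
  have "(\<Sum>i\<in>{1..m}. ?e i) = card {i\<in>{1..m}. ex C i}"
    using sum.inter_filter[of "{1..m}" "\<lambda>_. 1::nat" "ex C"] by simp
  then have e: "m - 1 \<le> (\<Sum>i\<in>{1..m}. ?e i)" using ex_count[OF cov] by simp
  have m1: "1 \<noteq> m" using m2 by auto
  have "(\<Sum>i\<in>{1..m}. bb i) = bb 1 + (\<Sum>i = 2..m - 1. bb i) + bb m" by (rule sum_split)
  moreover have "(\<Sum>i = 2..m - 1. bb i) + (m - 2) = SS"
  proof -
    have "(\<Sum>i = 2..m - 1. bb i + 1) = SS" unfolding SS_def
    proof (rule sum.cong)
      fix i assume i: "i \<in> {2..m - 1}"
      then have ir: "1 \<le> i" "i \<le> m" by auto
      show "bb i + 1 = kk i" using i kk_ge[OF ir] unfolding bb_def by auto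
    qed simp
    moreover have "(\<Sum>i = 2..m - 1. bb i + 1) = (\<Sum>i = 2..m - 1. bb i) + (m - 2)"
      by (subst sum.distrib) simp
    ultimately show ?thesis by simp
  qed
  ultimately have "(\<Sum>i\<in>{1..m}. bb i) + (m - 2) = kk 1 + kk m + SS"
    using m1 unfolding bb_def by simp
  then show ?thesis using s e m2 by linarith
qed

lemma main: "vertex_cover_number V SR = kk 1 + kk m + SS + 1"
  unfolding vertex_cover_number_def
proof (rule Least_equality)
  show "\<exists>C. is_vertex_cover V SR C \<and> finite C \<and> card C = kk 1 + kk m + SS + 1"
    using C0_cover card_C0 by (intro exI[of _ C0]) (auto simp: C0_def AA_def)
next
  fix y assume "\<exists>C. is_vertex_cover V SR C \<and> finite C \<and> card C = y"
  then show "kk 1 + kk m + SS + 1 \<le> y" using lower by blast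
qed

end

theorem lemma3p7:
  fixes m :: nat and n :: "nat \<Rightarrow> nat"
  assumes "m \<ge> 2"
    and "\<forall>i\<in>{1..m}. odd (n i) \<and> n i \<ge> 5"
  shows "vertex_cover_number (occ_verts m n)
           (strong_resolving_adj (occ_verts m n) (occ_adj m n))
         = m - 1 + n 1 div 2 + n m div 2 + (\<Sum>i = 2..m - 1. (n i - 2) div 2)"
proof -
  interpret occ m n using assms by unfold_locales auto
  show ?thesis using main T_eq by simp
qed

end
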